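(* There are polynomials $p_1,p_2$ such that the following holds. Let $P=\{x\in\mathbb{R}^n:Ax\le b\}$ be a nonempty polyhedron with $A,b$ rational, and let $\mathcal{Z}\subseteq\mathbb{R}^n$ be the linear subspace spanned by pairwise orthogonal rational vectors $x^1,\dots,x^k$. Let $x^*\in P$. Then there is $x'\in P$ with $x'_{\mathcal{Z}}=x^*_{\mathcal{Z}}$ and \[ \|x'\|\le p_1\!\left(\|x^*_{\mathcal{Z}}\|,\,2^{p_2(\langle P\rangle,\mathrm{bl}(\mathcal{Z}))}\right), \] where $\mathrm{bl}(\mathcal{Z})=\mathrm{bl}(x^1)+\dots+\mathrm{bl}(x^k)$.
   Context: $x_{\mathcal{Z}}$ is the orthogonal projection of $x$ onto $\mathcal{Z}$. Bit lengths: $\mathrm{bl}(k)=\max\{1,\lceil\log_2|k|\rceil\}$ for integers, $\mathrm{bl}(p/q)=\mathrm{bl}(p)+\mathrm{bl}(q)$ for reduced fractions, summed over entries for vectors and matrices. $\langle P\rangle=\mathrm{bl}(A)+\mathrm{bl}(b)$ (with $\langle P\rangle\ge n$ if $P=\mathbb{R}^n$). *)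

theory Defs
  imports "Jordan_Normal_Form.Matrix"
begin

definition bl_int :: "int \<Rightarrow> nat" where
  "bl_int k = nat (max 1 \<lceil>log 2 (real_of_int \<bar>k\<bar>)\<rceil>)"

definition bl_rat :: "rat \<Rightarrow> nat" where
  "bl_rat r = (case quotient_of r of (p, q) \<Rightarrow> bl_int p + bl_int q)"

definition bl_vec :: "rat vec \<Rightarrow> nat" where
  "bl_vec v = (\<Sum>i<dim_vec v. bl_rat (v $ i))"

definition bl_mat :: "rat mat \<Rightarrow> nat" where
  "bl_mat A = (\<Sum>i<dim_row A. \<Sum>j<dim_col A. bl_rat (A $$ (i, j)))"

text \<open>Encoding size of P = {x. A x <= b} in R^n; the max with n realises the
  convention that the size is at least n when P = R^n (m = 0 rows).\<close>
definition enc_poly :: "nat \<Rightarrow> rat mat \<Rightarrow> rat vec \<Rightarrow> nat" where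
  "enc_poly n A b = max n (bl_mat A + bl_vec b)"

definition bl_list :: "rat vec list \<Rightarrow> nat" where
  "bl_list xs = (\<Sum>v\<leftarrow>xs. bl_vec v)"

definition polyhedron :: "nat \<Rightarrow> rat mat \<Rightarrow> rat vec \<Rightarrow> real vec set" where
  "polyhedron n A b = {x \<in> carrier_vec n. map_mat of_rat A *\<^sub>v x \<le> map_vec of_rat b}"

definition lin_span :: "nat \<Rightarrow> rat vec list \<Rightarrow> real vec set" where
  "lin_span n xs = {vec n (\<lambda>j. \<Sum>i<length xs. c i * of_rat (xs ! i $ j)) | c :: nat \<Rightarrow> real. True}"

definition orth_proj :: "nat \<Rightarrow> real vec set \<Rightarrow> real vec \<Rightarrow> real vec" where
  "orth_proj n Z x = (THE y. y \<in> Z \<and> (\<forall>z\<in>Z. (x - y) \<bullet> z = 0))"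

definition vnorm :: "real vec \<Rightarrow> real" where
  "vnorm x = sqrt (x \<bullet> x)"

definition poly2 :: "(nat \<Rightarrow> nat \<Rightarrow> real) \<Rightarrow> nat \<Rightarrow> real \<Rightarrow> real \<Rightarrow> real" where
  "poly2 c d x y = (\<Sum>i\<le>d. \<Sum>j\<le>d. c i j * x ^ i * y ^ j)"

end

theory Submission
  imports Defs "Jordan_Normal_Form.Determinant"
begin


definition lhs :: "(nat \<Rightarrow> nat \<Rightarrow> real) \<Rightarrow> nat \<Rightarrow> (nat \<Rightarrow> real) \<Rightarrow> nat \<Rightarrow> real" where
  "lhs a n x i = (\<Sum>j<n. a i j * x j)"

definition tightset where
  "tightset a b m n x = {i. i < m \<and> lhs a n x i = b i}"

definition zeroset :: "nat \<Rightarrow> (nat \<Rightarrow> real) \<Rightarrow> nat set" where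
  "zeroset n x = {j. j < n \<and> x j = 0}"

definition pot where
  "pot a b m n x = card (tightset a b m n x) + card (zeroset n x)"

lemma lhs_add_scale: "lhs a n (\<lambda>j. x j + t * u j) i = lhs a n x i + t * lhs a n u i"
  unfolding lhs_def by (simp add: algebra_simps sum.distrib sum_distrib_left)

lemma lhs_scale: "lhs a n (\<lambda>j. s * v j) i = s * lhs a n v i"
  unfolding lhs_def by (simp add: algebra_simps sum_distrib_left)

lemma key_extremal:
  assumes feas: "\<forall>i<m. lhs a n x i \<le> b i"
    and maxi: "\<forall>y. (\<forall>i<m. lhs a n y i \<le> b i) \<longrightarrow> pot a b m n y \<le> pot a b m n x"
    and vz: "\<forall>j<n. x j = 0 \<longrightarrow> v j = 0"
    and vt: "\<forall>i<m. lhs a n x i = b i \<longrightarrow> lhs a n v i = 0"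
  shows "\<forall>j<n. v j = 0"
proof (rule ccontr)
  assume "\<not> (\<forall>j<n. v j = 0)"
  then obtain j0 where j0: "j0 < n" "v j0 \<noteq> 0" by auto
  with vz have xj0: "x j0 \<noteq> 0" by auto
  define \<sigma> where "\<sigma> = - x j0 / v j0"
  define u where "u = (\<lambda>j. \<sigma> * v j)"
  have ut: "lhs a n u i = 0" if "i < m" "lhs a n x i = b i" for i
    using vt that unfolding u_def lhs_scale by simp
  have uz: "u j = 0" if "j < n" "x j = 0" for j using vz that unfolding u_def by simp
  have uj0: "x j0 + u j0 = 0" unfolding u_def \<sigma>_def using j0 by simp
  define C where "C = insert 1 ((\<lambda>i. (b i - lhs a n x i) / lhs a n u i) ` {i. i < m \<and> lhs a n u i > 0})"
  have finC: "finite C" unfolding C_def by auto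
  define t where "t = Min C"
  have tC: "t \<in> C" unfolding t_def using finC C_def by (intro Min_in) auto
  have tle: "t \<le> c" if "c \<in> C" for c unfolding t_def using finC that by auto
  define y where "y = (\<lambda>j. x j + t * u j)"
  have feasy: "\<forall>i<m. lhs a n y i \<le> b i"
  proof (intro allI impI)
    fix i assume i: "i < m"
    show "lhs a n y i \<le> b i"
    proof (cases "lhs a n u i > 0")
      case True
      then have "t \<le> (b i - lhs a n x i) / lhs a n u i" using i by (intro tle) (auto simp: C_def)
      then have "t * lhs a n u i \<le> b i - lhs a n x i" using True by (simp add: le_divide_eq)
      then show ?thesis unfolding y_def lhs_add_scale by simp
    next
      case False
      have "t \<ge> 0"
      proof -
        have "c \<ge> 0" if "c \<in> C" for c
          using that feas unfolding C_def by (auto intro!: divide_nonneg_pos)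
        then show ?thesis using tC by auto
      qed
      then have "t * lhs a n u i \<le> 0" using False by (simp add: mult_nonneg_nonpos)
      moreover have "lhs a n x i \<le> b i" using feas i by auto
      ultimately show ?thesis unfolding y_def lhs_add_scale by linarith
    qed
  qed
  have T1: "tightset a b m n x \<subseteq> tightset a b m n y"
    unfolding tightset_def y_def lhs_add_scale using ut by auto
  have Z1: "zeroset n x \<subseteq> zeroset n y"
    unfolding zeroset_def y_def using uz by auto
  have finT: "finite (tightset a b m n y)" unfolding tightset_def by auto
  have finZ: "finite (zeroset n y)" unfolding zeroset_def by auto
  have "pot a b m n y > pot a b m n x"
  proof (cases "t = 1")
    case True
    have "j0 \<in> zeroset n y" "j0 \<notin> zeroset n x" using uj0 j0 xj0 True
      unfolding zeroset_def y_def by auto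
    then have "zeroset n x \<subset> zeroset n y" using Z1 by auto
    then have "card (zeroset n x) < card (zeroset n y)" using finZ by (rule psubset_card_mono[rotated])
    moreover have "card (tightset a b m n x) \<le> card (tightset a b m n y)" using T1 finT by (rule card_mono[rotated])
    ultimately show ?thesis unfolding pot_def by simp
  next
    case False
    then obtain i where i: "i < m" "lhs a n u i > 0" "t = (b i - lhs a n x i) / lhs a n u i"
      using tC unfolding C_def by auto
    have "lhs a n y i = b i" unfolding y_def lhs_add_scale using i by simp
    then have "i \<in> tightset a b m n y" using i unfolding tightset_def by auto
    moreover have "i \<notin> tightset a b m n x" using ut i unfolding tightset_def by auto
    ultimately have "tightset a b m n x \<subset> tightset a b m n y" using T1 by auto
    then have "card (tightset a b m n x) < card (tightset a b m n y)" using finT by (rule psubset_card_mono[rotated])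
    moreover have "card (zeroset n x) \<le> card (zeroset n y)" using Z1 finZ by (rule card_mono[rotated])
    ultimately show ?thesis unfolding pot_def by simp
  qed
  with maxi feasy show False by force
qed

lemma det_Ints:
  assumes B: "(B :: real mat) \<in> carrier_mat n n" and ints: "\<forall>i<n. \<forall>j<n. B $$ (i, j) \<in> \<int>"
  shows "det B \<in> \<int>"
  unfolding det_def'[OF B]
proof (intro Ints_sum Ints_mult Ints_prod)
  fix p i assume p: "p \<in> {p. p permutes {0..<n}}" and i: "i \<in> {0..<n}"
  have "p i \<in> {0..<n}" using p i by (auto simp: permutes_in_image)
  then show "B $$ (i, p i) \<in> \<int>" using ints i by auto
qed auto

lemma det_bound:
  assumes B: "(B :: real mat) \<in> carrier_mat n n" and bd: "\<forall>i<n. \<forall>j<n. \<bar>B $$ (i, j)\<bar> \<le> h"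
  shows "\<bar>det B\<bar> \<le> fact n * h ^ n"
proof -
  have h0: "0 \<le> h" if "n > 0" using bd that by (meson abs_ge_zero order_trans)
  have "\<bar>det B\<bar> \<le> (\<Sum>p \<in> {p. p permutes {0..<n}}. \<bar>signof p * (\<Prod>i = 0..<n. B $$ (i, p i))\<bar>)"
    unfolding det_def'[OF B] by (rule sum_abs)
  also have "\<dots> \<le> (\<Sum>p \<in> {p. p permutes {0..<n}}. h ^ n)"
  proof (rule sum_mono)
    fix p assume p: "p \<in> {p. p permutes {0..<n}}"
    have "\<bar>(signof p :: real)\<bar> = 1" by (simp add: sign_def)
    then have "\<bar>signof p * (\<Prod>i = 0..<n. B $$ (i, p i))\<bar> = (\<Prod>i = 0..<n. \<bar>B $$ (i, p i)\<bar>)"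
      by (simp add: abs_mult abs_prod)
    also have "\<dots> \<le> (\<Prod>i = 0..<n. h)"
    proof (rule prod_mono)
      fix i assume i: "i \<in> {0..<n}"
      have "p i \<in> {0..<n}" using p i by (auto simp: permutes_in_image)
      then show "0 \<le> \<bar>B $$ (i, p i)\<bar> \<and> \<bar>B $$ (i, p i)\<bar> \<le> h" using bd i by auto
    qed
    finally show "\<bar>signof p * (\<Prod>i = 0..<n. B $$ (i, p i))\<bar> \<le> h ^ n" by simp
  qed
  also have "\<dots> = fact n * h ^ n" by (simp add: card_permutations)
  finally show ?thesis .
qed

lemma pot_bound: "pot a b m n x < m + n + 1"
proof -
  have "card (tightset a b m n x) \<le> card {..<m}" unfolding tightset_def by (rule card_mono) auto
  moreover have "card (zeroset n x) \<le> card {..<n}" unfolding zeroset_def by (rule card_mono) auto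
  ultimately show ?thesis unfolding pot_def by simp
qed

lemma core_bound:
  assumes ints: "\<forall>i<m. \<forall>j<n. a i j \<in> \<int>" and Hb: "\<forall>i<m. \<forall>j<n. \<bar>a i j\<bar> \<le> H" and H0: "0 \<le> H"
    and Rb: "\<forall>i<m. \<bar>b i\<bar> \<le> R" and R0: "0 \<le> R"
    and ex: "\<forall>i<m. lhs a n x0 i \<le> b i"
  shows "\<exists>x. (\<forall>i<m. lhs a n x i \<le> b i) \<and>
     (\<forall>j<n. \<bar>x j\<bar> \<le> (real m * H * R + 1) * fact n * (real m * H^2 + 1) ^ n)"
proof -
  obtain x where feas: "\<forall>i<m. lhs a n x i \<le> b i"
    and maxi: "\<forall>y. (\<forall>i<m. lhs a n y i \<le> b i) \<longrightarrow> pot a b m n y \<le> pot a b m n x"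
    using Lattices_Big.ex_has_greatest_nat[of "\<lambda>y. \<forall>i<m. lhs a n y i \<le> b i" x0 "pot a b m n" "m+n+1"]
      ex pot_bound by blast
  define T where "T = tightset a b m n x"
  define J where "J = {j. j < n \<and> x j \<noteq> 0}"
  have finT: "finite T" unfolding T_def tightset_def by auto
  have Tm: "T \<subseteq> {..<m}" unfolding T_def tightset_def by auto
  have cardT: "card T \<le> m" using card_mono[OF _ Tm] by simp
  define S where "S = (\<lambda>p q. \<Sum>i\<in>T. a i p * a i q)"
  define ind where "ind = (\<lambda>p. if p \<in> J then (1::real) else 0)"
  define Gf where "Gf = (\<lambda>p q. ind p * ind q * S p q + (if p = q \<and> p \<notin> J then 1 else 0))"
  define G where "G = mat n n (\<lambda>(p, q). Gf p q)"
  have G: "G \<in> carrier_mat n n" unfolding G_def by simp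
  have indx: "ind q * x q = x q" if "q < n" for q using that unfolding ind_def J_def by auto
  have Gmv: "(G *\<^sub>v v) $ p = (\<Sum>q<n. Gf p q * v $ q)" if "p < n" "v \<in> carrier_vec n" for p v
    using that unfolding G_def mult_mat_vec_def scalar_prod_def
    by (auto intro!: sum.cong simp: lessThan_atLeast0)
  have quad: "(\<Sum>p<n. w p * (\<Sum>q<n. Gf p q * w q)) =
      (\<Sum>i\<in>T. (\<Sum>p<n. ind p * w p * a i p)^2) + (\<Sum>p<n. (if p \<notin> J then w p ^ 2 else 0))" for w
  proof -
    have "(\<Sum>p<n. w p * (\<Sum>q<n. Gf p q * w q)) =
       (\<Sum>p<n. \<Sum>q<n. (\<Sum>i\<in>T. (ind p * w p * a i p) * (ind q * w q * a i q))) +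
       (\<Sum>p<n. \<Sum>q<n. w p * (if p = q \<and> p \<notin> J then 1 else 0) * w q)"
      unfolding Gf_def S_def sum.distrib[symmetric] sum_distrib_left sum_distrib_right
      by (intro sum.cong refl) (simp add: algebra_simps sum_distrib_left)
    also have "(\<Sum>p<n. \<Sum>q<n. w p * (if p = q \<and> p \<notin> J then 1 else 0) * w q) =
        (\<Sum>p<n. (if p \<notin> J then w p ^ 2 else 0))"
    proof (intro sum.cong refl)
      fix p assume p: "p \<in> {..<n}"
      have "(\<Sum>q<n. w p * (if p = q \<and> p \<notin> J then 1 else 0) * w q) =
            (\<Sum>q<n. if q = p then (if p \<notin> J then w p ^ 2 else 0) else 0)"
        by (intro sum.cong refl) (auto simp: power2_eq_square)
      also have "\<dots> = (if p \<notin> J then w p ^ 2 else 0)" using p by (simp add: sum.delta)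
      finally show "(\<Sum>q<n. w p * (if p = q \<and> p \<notin> J then 1 else 0) * w q) = (if p \<notin> J then w p ^ 2 else 0)" .
    qed
    also have "(\<Sum>p<n. \<Sum>q<n. (\<Sum>i\<in>T. (ind p * w p * a i p) * (ind q * w q * a i q))) =
        (\<Sum>i\<in>T. (\<Sum>p<n. ind p * w p * a i p)^2)"
      by (simp add: power2_eq_square sum_product sum.swap[of _ T])
    finally show ?thesis .
  qed
  have detG: "det G \<noteq> 0"
  proof
    assume "det G = 0"
    then obtain v where v: "v \<in> carrier_vec n" "v \<noteq> 0\<^sub>v n" "G *\<^sub>v v = 0\<^sub>v n"
      using det_0_iff_vec_prod_zero[OF G] by auto
    define w where "w = (\<lambda>j. v $ j)"
    have Gw0: "(\<Sum>q<n. Gf p q * w q) = 0" if "p < n" for p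
      using Gmv[OF that v(1)] v(3) that unfolding w_def by simp
    have "(\<Sum>i\<in>T. (\<Sum>p<n. ind p * w p * a i p)^2) + (\<Sum>p<n. (if p \<notin> J then w p ^ 2 else 0)) = 0"
      unfolding quad[symmetric] using Gw0 by simp
    moreover have "0 \<le> (\<Sum>i\<in>T. (\<Sum>p<n. ind p * w p * a i p)^2)" by (intro sum_nonneg) auto
    moreover have "0 \<le> (\<Sum>p<n. (if p \<notin> J then w p ^ 2 else 0))" by (intro sum_nonneg) auto
    ultimately have z1: "(\<Sum>i\<in>T. (\<Sum>p<n. ind p * w p * a i p)^2) = 0"
      and z2: "(\<Sum>p<n. (if p \<notin> J then w p ^ 2 else 0)) = 0" by linarith+
    have wJ: "w p = 0" if "p < n" "p \<notin> J" for p
    proof -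
      have "\<forall>p\<in>{..<n}. (if p \<notin> J then w p ^ 2 else 0) = 0"
        using z2 by (subst (asm) sum_nonneg_eq_0_iff) auto
      then have "w p ^ 2 = 0" using that by force
      then show ?thesis by simp
    qed
    have indw: "ind p * w p = w p" if "p < n" for p using wJ[OF that] unfolding ind_def by auto
    have "\<forall>i\<in>T. (\<Sum>p<n. ind p * w p * a i p)^2 = 0"
      using z1 finT by (subst (asm) sum_nonneg_eq_0_iff) auto
    then have lw: "lhs a n w i = 0" if "i \<in> T" for i
      using that indw unfolding lhs_def by (auto simp: mult.commute)
    have "\<forall>j<n. w j = 0"
      by (rule key_extremal[OF feas maxi]) (use wJ lw in \<open>auto simp: J_def T_def tightset_def\<close>)
    then have "v = 0\<^sub>v n" using v(1) unfolding w_def by (intro eq_vecI) auto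
    with v(2) show False by simp
  qed
  have detG1: "\<bar>det G\<bar> \<ge> 1"
  proof (rule Ints_nonzero_abs_ge1[OF _ detG], rule det_Ints[OF G], intro allI impI)
    fix p q assume "p < n" "q < n"
    have "S p q \<in> \<int>" unfolding S_def using ints Tm \<open>p < n\<close> \<open>q < n\<close>
      by (intro Ints_sum Ints_mult) (meson lessThan_iff subsetD)+
    then show "G $$ (p, q) \<in> \<int>" using \<open>p < n\<close> \<open>q < n\<close> unfolding G_def Gf_def ind_def by auto
  qed
  define Y where "Y = real m * H * R + 1"
  have Y1: "Y \<ge> 1" unfolding Y_def using H0 R0 by simp
  define h where "h = real m * H^2 + 1"
  have h1: "h \<ge> 1" unfolding h_def by simp
  define xv where "xv = vec n (\<lambda>j. x j / Y)"
  have xv: "xv \<in> carrier_vec n" unfolding xv_def by simp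
  have Gx: "\<bar>(G *\<^sub>v xv) $ p\<bar> \<le> 1" if p: "p < n" for p
  proof -
    have "(G *\<^sub>v xv) $ p = (\<Sum>q<n. Gf p q * xv $ q)" by (rule Gmv[OF p xv])
    also have "\<dots> = (\<Sum>q<n. Gf p q * x q) / Y"
      unfolding xv_def by (simp add: sum_divide_distrib)
    also have "(\<Sum>q<n. Gf p q * x q) = (if p \<in> J then (\<Sum>i\<in>T. a i p * b i) else 0)"
    proof (cases "p \<in> J")
      case True
      have "(\<Sum>q<n. Gf p q * x q) = (\<Sum>q<n. S p q * x q)"
        using True indx by (intro sum.cong refl) (auto simp: Gf_def ind_def mult.assoc)
      also have "\<dots> = (\<Sum>i\<in>T. a i p * lhs a n x i)"
        unfolding S_def lhs_def sum_distrib_left sum_distrib_right mult.assoc by (rule sum.swap)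
      also have "\<dots> = (\<Sum>i\<in>T. a i p * b i)"
        by (intro sum.cong refl) (auto simp: T_def tightset_def)
      finally show ?thesis using True by simp
    next
      case False
      have "(\<Sum>q<n. Gf p q * x q) = (\<Sum>q<n. if q = p then x p else 0)"
        using False by (intro sum.cong refl) (auto simp: Gf_def ind_def)
      also have "\<dots> = 0" using False p by (simp add: J_def)
      finally show ?thesis using False by simp
    qed
    finally have eq: "(G *\<^sub>v xv) $ p = (if p \<in> J then (\<Sum>i\<in>T. a i p * b i) else 0) / Y" .
    have "\<bar>\<Sum>i\<in>T. a i p * b i\<bar> \<le> (\<Sum>i\<in>T. H * R)"
    proof (rule order_trans[OF sum_abs], rule sum_mono)
      fix i assume "i \<in> T"
      then have "i < m" using Tm by auto
      then have "\<bar>a i p\<bar> \<le> H" "\<bar>b i\<bar> \<le> R" using Hb Rb p by auto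
      then show "\<bar>a i p * b i\<bar> \<le> H * R" unfolding abs_mult using H0 by (intro mult_mono) auto
    qed
    also have "\<dots> = card T * (H * R)" by simp
    also have "\<dots> \<le> m * (H * R)" using cardT H0 R0 by (intro mult_right_mono) auto
    finally have "\<bar>\<Sum>i\<in>T. a i p * b i\<bar> \<le> m * (H * R)" .
    then have "\<bar>(if p \<in> J then (\<Sum>i\<in>T. a i p * b i) else 0)\<bar> \<le> m * (H * R)"
      using H0 R0 by (cases "p \<in> J") auto
    then have c: "\<bar>(if p \<in> J then (\<Sum>i\<in>T. a i p * b i) else 0)\<bar> \<le> Y" unfolding Y_def by (simp add: mult.assoc)
    have "\<bar>(G *\<^sub>v xv) $ p\<bar> = \<bar>(if p \<in> J then (\<Sum>i\<in>T. a i p * b i) else 0)\<bar> / Y"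
      unfolding eq abs_divide using Y1 by simp
    also have "\<dots> \<le> 1" using c Y1 by simp
    finally show ?thesis .
  qed
  have Gb: "\<bar>Gf p q\<bar> \<le> h" if "p < n" "q < n" for p q
  proof -
    have "\<bar>S p q\<bar> \<le> (\<Sum>i\<in>T. H * H)"
    proof (unfold S_def, rule order_trans[OF sum_abs], rule sum_mono)
      fix i assume "i \<in> T"
      then have "i < m" using Tm by auto
      then have "\<bar>a i p\<bar> \<le> H" "\<bar>a i q\<bar> \<le> H" using Hb that by auto
      then show "\<bar>a i p * a i q\<bar> \<le> H * H" unfolding abs_mult using H0 by (intro mult_mono) auto
    qed
    also have "\<dots> \<le> m * H^2" using cardT H0 by (simp add: power2_eq_square mult_right_mono)
    finally have "\<bar>S p q\<bar> \<le> m * H^2" .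
    then show ?thesis unfolding Gf_def ind_def h_def by auto
  qed
  have bound: "\<bar>x k\<bar> \<le> Y * fact n * h ^ n" if k: "k < n" for k
  proof -
    define y where "y = G *\<^sub>v xv"
    have RC: "replace_col G y k \<in> carrier_mat n n" using G by (simp add: replace_col_def)
    have "\<bar>det (replace_col G y k)\<bar> \<le> fact n * h ^ n"
    proof (rule det_bound[OF RC], intro allI impI)
      fix i j assume ij: "i < n" "j < n"
      have e: "replace_col G y k $$ (i, j) = (if j = k then y $ i else G $$ (i, j))"
        using ij G by (simp add: replace_col_def)
      have g: "G $$ (i, j) = Gf i j" using ij unfolding G_def by simp
      show "\<bar>replace_col G y k $$ (i, j)\<bar> \<le> h"
        unfolding e g using Gx[OF ij(1)] Gb[OF ij] h1 unfolding y_def by auto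
    qed
    then have A: "\<bar>xv $ k\<bar> * \<bar>det G\<bar> \<le> fact n * h ^ n"
      unfolding y_def cramer_lemma_mat[OF G xv k] by (simp add: abs_mult)
    have "\<bar>xv $ k\<bar> * 1 \<le> \<bar>xv $ k\<bar> * \<bar>det G\<bar>" by (rule mult_left_mono[OF detG1 abs_ge_zero])
    with A have B: "\<bar>xv $ k\<bar> \<le> fact n * h ^ n" by linarith
    have "xv $ k = x k / Y" using k unfolding xv_def by simp
    then have "\<bar>xv $ k\<bar> = \<bar>x k\<bar> / Y" using Y1 by (simp add: abs_divide)
    with B have "\<bar>x k\<bar> / Y \<le> fact n * h ^ n" by simp
    then have "\<bar>x k\<bar> \<le> (fact n * h ^ n) * Y" using Y1 by (simp add: pos_divide_le_eq)
    then show ?thesis by (simp add: mult.commute mult.left_commute)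
  qed
  show ?thesis using feas bound unfolding Y_def h_def by blast
qed



definition xf :: "rat vec list \<Rightarrow> nat \<Rightarrow> nat \<Rightarrow> real" where
  "xf xs l j = real_of_rat (xs ! l $ j)"

lemma span_dot:
  "(\<Sum>j<n. u j * vec n (\<lambda>j. \<Sum>i<k. c i * xf xs i j) $ j) = (\<Sum>i<k. c i * (\<Sum>j<n. u j * xf xs i j))"
proof -
  have "(\<Sum>j<n. u j * vec n (\<lambda>j. \<Sum>i<k. c i * xf xs i j) $ j) = (\<Sum>j<n. \<Sum>i<k. c i * (u j * xf xs i j))"
    by (intro sum.cong refl) (simp add: sum_distrib_left algebra_simps)
  also have "\<dots> = (\<Sum>i<k. c i * (\<Sum>j<n. u j * xf xs i j))"
    by (subst sum.swap) (simp add: sum_distrib_left)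
  finally show ?thesis .
qed

lemma lin_span_dim: "w \<in> lin_span n xs \<Longrightarrow> dim_vec w = n"
  unfolding lin_span_def by auto

lemma lin_span_elem: "w \<in> lin_span n xs \<Longrightarrow> \<exists>c. w = vec n (\<lambda>j. \<Sum>i<length xs. c i * xf xs i j)"
  unfolding lin_span_def xf_def by auto

lemma lin_span_intro: "vec n (\<lambda>j. \<Sum>i<length xs. c i * xf xs i j) \<in> lin_span n xs"
  unfolding lin_span_def xf_def by auto

lemma xf_in_span: assumes "l < length xs" shows "vec n (xf xs l) \<in> lin_span n xs"
proof -
  have "vec n (xf xs l) = vec n (\<lambda>j. \<Sum>i<length xs. (if i = l then 1 else 0) * xf xs i j)"
  proof (intro eq_vecI)
    fix j assume "j < dim_vec (vec n (\<lambda>j. \<Sum>i<length xs. (if i = l then 1 else 0) * xf xs i j))"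
    have "(\<Sum>i<length xs. (if i = l then 1 else 0) * xf xs i j) = (\<Sum>i<length xs. if i = l then xf xs l j else 0)"
      by (intro sum.cong) auto
    also have "\<dots> = xf xs l j" using assms by simp
    finally show "vec n (xf xs l) $ j = vec n (\<lambda>j. \<Sum>i<length xs. (if i = l then 1 else 0) * xf xs i j) $ j"
      using \<open>j < _\<close> by simp
  qed simp
  then show ?thesis using lin_span_intro by metis
qed

lemma dot_span_zero:
  assumes w: "w \<in> lin_span n xs" and u: "dim_vec u = n"
    and perp: "\<forall>l<length xs. (\<Sum>j<n. u $ j * xf xs l j) = 0"
  shows "u \<bullet> w = 0"
proof -
  obtain c where c: "w = vec n (\<lambda>j. \<Sum>i<length xs. c i * xf xs i j)" using lin_span_elem[OF w] by auto
  have "u \<bullet> w = (\<Sum>j<n. u $ j * w $ j)" unfolding scalar_prod_def using lin_span_dim[OF w]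
    by (simp add: lessThan_atLeast0)
  also have "\<dots> = (\<Sum>i<length xs. c i * (\<Sum>j<n. u $ j * xf xs i j))" unfolding c by (rule span_dot)
  also have "\<dots> = 0" using perp by simp
  finally show ?thesis .
qed

lemma dot_lessThan: "dim_vec w = n \<Longrightarrow> u \<bullet> w = (\<Sum>j<n. u $ j * w $ j)"
  unfolding scalar_prod_def by (simp add: lessThan_atLeast0)

lemma proj_eq:
  assumes x1: "x1 \<in> carrier_vec n" and x2: "x2 \<in> carrier_vec n"
    and same: "\<forall>l<length xs. (\<Sum>j<n. x1 $ j * xf xs l j) = (\<Sum>j<n. x2 $ j * xf xs l j)"
  shows "orth_proj n (lin_span n xs) x1 = orth_proj n (lin_span n xs) x2"
proof -
  have H: "(x1 - y) \<bullet> w = (x2 - y) \<bullet> w" if y: "y \<in> lin_span n xs" and w: "w \<in> lin_span n xs" for y w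
  proof -
    have dy: "dim_vec y = n" and dw: "dim_vec w = n" using y w by (auto simp: lin_span_dim)
    have "(x1 - y) \<bullet> w - (x2 - y) \<bullet> w = (x1 - x2) \<bullet> w"
      unfolding dot_lessThan[OF dw] using dy x1 x2 by (simp add: sum_subtractf[symmetric] algebra_simps)
    also have "\<dots> = 0"
    proof (rule dot_span_zero[OF w])
      show "dim_vec (x1 - x2) = n" using x2 by simp
      show "\<forall>l<length xs. (\<Sum>j<n. (x1 - x2) $ j * xf xs l j) = 0"
        using same x2 by (simp add: algebra_simps sum_subtractf)
    qed
    finally show ?thesis by simp
  qed
  show ?thesis unfolding orth_proj_def by (intro arg_cong[where f = The] ext) (use H in auto)
qed

lemma proj_uniq:
  assumes z0Z: "z0 \<in> lin_span n xs" and y: "y \<in> lin_span n xs"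
    and perp0: "\<forall>l<length xs. (\<Sum>j<n. (xstar $ j - z0 $ j) * xf xs l j) = 0"
    and Py: "\<forall>w\<in>lin_span n xs. (xstar - y) \<bullet> w = 0"
  shows "y = z0"
proof -
  let ?k = "length xs"
  have dy: "dim_vec y = n" using y by (rule lin_span_dim)
  have dz: "dim_vec z0 = n" using z0Z by (rule lin_span_dim)
  have py: "(\<Sum>j<n. (z0 $ j - y $ j) * xf xs l j) = 0" if l: "l < ?k" for l
  proof -
    have "(xstar - y) \<bullet> vec n (xf xs l) = 0" using Py xf_in_span[OF l] by blast
    then have a: "(\<Sum>j<n. (xstar $ j - y $ j) * xf xs l j) = 0"
      unfolding dot_lessThan[of "vec n (xf xs l)" n, simplified] using dy by simp
    have b: "(\<Sum>j<n. (xstar $ j - z0 $ j) * xf xs l j) = 0" using perp0 l by blast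
    have "(\<Sum>j<n. (z0 $ j - y $ j) * xf xs l j) = (\<Sum>j<n. (xstar $ j - y $ j) * xf xs l j) - (\<Sum>j<n. (xstar $ j - z0 $ j) * xf xs l j)"
      unfolding sum_subtractf[symmetric] by (intro sum.cong refl) (simp add: algebra_simps)
    then show ?thesis using a b by simp
  qed
  from lin_span_elem[OF z0Z] obtain c where c: "z0 = vec n (\<lambda>j. \<Sum>i<?k. c i * xf xs i j)" by blast
  from lin_span_elem[OF y] obtain cy where cy: "y = vec n (\<lambda>j. \<Sum>i<?k. cy i * xf xs i j)" by blast
    define d where "d = (\<lambda>i. c i - cy i)"
  have e: "z0 $ j - y $ j = (\<Sum>i<?k. d i * xf xs i j)" if "j < n" for j
  proof -
    have "z0 $ j - y $ j = (\<Sum>i<?k. c i * xf xs i j) - (\<Sum>i<?k. cy i * xf xs i j)"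
      using that unfolding c cy by simp
    also have "\<dots> = (\<Sum>i<?k. d i * xf xs i j)"
      unfolding d_def sum_subtractf[symmetric] left_diff_distrib ..
    finally show ?thesis .
  qed
  have "(\<Sum>j<n. (z0 $ j - y $ j) * (z0 $ j - y $ j)) = 
     (\<Sum>j<n. (z0 $ j - y $ j) * vec n (\<lambda>j. \<Sum>i<?k. d i * xf xs i j) $ j)"
  proof (rule sum.cong[OF refl])
    fix j assume "j \<in> {..<n}"
    then have j: "j < n" by simp
    show "(z0 $ j - y $ j) * (z0 $ j - y $ j) = (z0 $ j - y $ j) * vec n (\<lambda>j. \<Sum>i<?k. d i * xf xs i j) $ j"
      unfolding index_vec[OF j] e[OF j] ..
  qed
  also have "\<dots> = (\<Sum>i<?k. d i * (\<Sum>j<n. (z0 $ j - y $ j) * xf xs i j))" by (rule span_dot)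
  also have "\<dots> = (\<Sum>i<?k. d i * 0)" by (rule sum.cong[OF refl]) (simp add: py)
  also have "\<dots> = 0" by simp
  finally have s0: "(\<Sum>j<n. (z0 $ j - y $ j) * (z0 $ j - y $ j)) = 0" .
  have "\<forall>j\<in>{..<n}. (z0 $ j - y $ j) * (z0 $ j - y $ j) = 0"
    using iffD1[OF sum_nonneg_eq_0_iff s0] by simp
  then have eqj: "y $ j = z0 $ j" if "j < n" for j using that by simp
  show "y = z0"
  proof (rule eq_vecI)
    show "dim_vec y = dim_vec z0" using dy dz by simp
    fix j assume "j < dim_vec z0"
    then show "y $ j = z0 $ j" using dz eqj by simp
  qed
  qed

lemma proj_facts:
  assumes dims: "\<forall>v \<in> set xs. v \<in> carrier_vec n"
    and orth: "\<forall>i < length xs. \<forall>j < length xs. i \<noteq> j \<longrightarrow> xs ! i \<bullet> xs ! j = 0"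
    and xs_: "xstar \<in> carrier_vec n"
  shows "orth_proj n (lin_span n xs) xstar \<in> carrier_vec n \<and>
    (\<forall>l<length xs. (\<Sum>j<n. xstar $ j * xf xs l j) = (\<Sum>j<n. orth_proj n (lin_span n xs) xstar $ j * xf xs l j))"
proof -
  let ?k = "length xs"
  let ?Z = "lin_span n xs"
  have dimx: "dim_vec (xs ! l) = n" if "l < ?k" for l using dims that by auto
  have orthf: "(\<Sum>j<n. xf xs i j * xf xs l j) = 0" if "i < ?k" "l < ?k" "i \<noteq> l" for i l
  proof -
    have "(\<Sum>j<n. xf xs i j * xf xs l j) = real_of_rat (xs ! i \<bullet> xs ! l)"
      unfolding dot_lessThan[OF dimx[OF that(2)]] xf_def by (simp add: of_rat_sum of_rat_mult)
    then show ?thesis using orth that by simp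
  qed
  define c where "c = (\<lambda>l. (\<Sum>j<n. xstar $ j * xf xs l j) / (\<Sum>j<n. xf xs l j * xf xs l j))"
  define z0 where "z0 = vec n (\<lambda>j. \<Sum>i<?k. c i * xf xs i j)"
  have z0Z: "z0 \<in> ?Z" unfolding z0_def by (rule lin_span_intro)
  have z0c: "z0 \<in> carrier_vec n" unfolding z0_def by simp
  have perp0: "(\<Sum>j<n. xstar $ j * xf xs l j) = (\<Sum>j<n. z0 $ j * xf xs l j)" if l: "l < ?k" for l
  proof -
    have "(\<Sum>j<n. z0 $ j * xf xs l j) = (\<Sum>j<n. xf xs l j * z0 $ j)" by (simp add: mult.commute)
    also have "\<dots> = (\<Sum>i<?k. c i * (\<Sum>j<n. xf xs l j * xf xs i j))" unfolding z0_def by (rule span_dot)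
    also have "\<dots> = (\<Sum>i<?k. if i = l then c l * (\<Sum>j<n. xf xs l j * xf xs l j) else 0)"
    proof (rule sum.cong[OF refl])
      fix i assume "i \<in> {..<?k}"
      then have i: "i < ?k" by simp
      show "c i * (\<Sum>j<n. xf xs l j * xf xs i j) = (if i = l then c l * (\<Sum>j<n. xf xs l j * xf xs l j) else 0)"
      proof (cases "i = l")
        case False
        have "(\<Sum>j<n. xf xs l j * xf xs i j) = 0" using orthf[of l i] l i False by simp
        then show ?thesis using False by simp
      qed simp
    qed
    also have "\<dots> = c l * (\<Sum>j<n. xf xs l j * xf xs l j)" using l by simp
    also have "\<dots> = (\<Sum>j<n. xstar $ j * xf xs l j)"
    proof (cases "(\<Sum>j<n. xf xs l j * xf xs l j) = 0")
      case True
      then have "\<forall>j\<in>{..<n}. xf xs l j * xf xs l j = 0"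
        using sum_nonneg_eq_0_iff[of "{..<n}" "\<lambda>j. xf xs l j * xf xs l j"] by simp
      then have "(\<Sum>j<n. xstar $ j * xf xs l j) = 0" by simp
      then show ?thesis using True by simp
    next
      case False
      then show ?thesis unfolding c_def by simp
    qed
    finally show ?thesis by simp
  qed
  have perp1: "\<forall>l<?k. (\<Sum>j<n. (xstar $ j - z0 $ j) * xf xs l j) = 0"
  proof (intro allI impI)
    fix l assume l: "l < ?k"
    have "(\<Sum>j<n. (xstar $ j - z0 $ j) * xf xs l j) = (\<Sum>j<n. xstar $ j * xf xs l j) - (\<Sum>j<n. z0 $ j * xf xs l j)"
      unfolding sum_subtractf[symmetric] left_diff_distrib ..
    then show "(\<Sum>j<n. (xstar $ j - z0 $ j) * xf xs l j) = 0" using perp0[OF l] by simp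
  qed
  have P0: "\<forall>w\<in>?Z. (xstar - z0) \<bullet> w = 0"
  proof
    fix w assume w: "w \<in> ?Z"
    show "(xstar - z0) \<bullet> w = 0"
    proof (rule dot_span_zero[OF w])
      show "dim_vec (xstar - z0) = n" using z0c by simp
      show "\<forall>l<?k. (\<Sum>j<n. (xstar - z0) $ j * xf xs l j) = 0"
      proof (intro allI impI)
        fix l assume l: "l < ?k"
        have "(\<Sum>j<n. (xstar - z0) $ j * xf xs l j) = (\<Sum>j<n. (xstar $ j - z0 $ j) * xf xs l j)"
          by (rule sum.cong) (use z0c in auto)
        then show "(\<Sum>j<n. (xstar - z0) $ j * xf xs l j) = 0" using perp1 l by simp
      qed
    qed
  qed
  have uniq: "y = z0" if y: "y \<in> ?Z" and Py: "\<forall>w\<in>?Z. (xstar - y) \<bullet> w = 0" for y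
    by (rule proj_uniq[OF z0Z y perp1 Py])
  have "orth_proj n ?Z xstar = z0"
    unfolding orth_proj_def
  proof (rule the_equality)
    show "z0 \<in> ?Z \<and> (\<forall>w\<in>?Z. (xstar - z0) \<bullet> w = 0)" using z0Z P0 by blast
    fix y assume "y \<in> ?Z \<and> (\<forall>w\<in>?Z. (xstar - y) \<bullet> w = 0)"
    then show "y = z0" using uniq by blast
  qed
  then show ?thesis using z0c perp0 by simp
qed



lemma bl_int_ge1: "bl_int p \<ge> 1"
  unfolding bl_int_def by simp

lemma bl_int_bound: "\<bar>real_of_int p\<bar> \<le> 2 ^ bl_int p"
proof (cases "p = 0")
  case True then show ?thesis by simp
next
  case False
  then have p1: "\<bar>real_of_int p\<bar> \<ge> 1" by linarith
  have "log 2 \<bar>real_of_int p\<bar> \<le> real (bl_int p)"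
  proof -
    have "log 2 \<bar>real_of_int p\<bar> \<le> real_of_int \<lceil>log 2 \<bar>real_of_int p\<bar>\<rceil>" by (rule le_of_int_ceiling)
    also have "\<dots> \<le> real_of_int (max 1 \<lceil>log 2 \<bar>real_of_int p\<bar>\<rceil>)" by simp
    also have "\<dots> = real (bl_int p)" unfolding bl_int_def by simp
    finally show ?thesis .
  qed
  then have "2 powr log 2 \<bar>real_of_int p\<bar> \<le> 2 powr real (bl_int p)" by (intro powr_mono) auto
  then show ?thesis using p1 by (simp add: powr_realpow)
qed

lemma bl_rat_bounds:
  "\<bar>real_of_rat r\<bar> \<le> 2 ^ bl_rat r" "real_of_int (snd (quotient_of r)) \<le> 2 ^ bl_rat r" "bl_rat r \<ge> 1"
proof -
  obtain p q where pq: "quotient_of r = (p, q)" by (cases "quotient_of r") auto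
  have q0: "q > 0" using quotient_of_denom_pos[OF pq] .
  have r: "r = of_int p / of_int q" using quotient_of_div[OF pq] .
  have bl: "bl_rat r = bl_int p + bl_int q" unfolding bl_rat_def pq by simp
  have "\<bar>real_of_rat r\<bar> = \<bar>real_of_int p\<bar> / real_of_int q" using q0 unfolding r by (simp add: of_rat_divide abs_divide)
  also have "\<dots> \<le> \<bar>real_of_int p\<bar>"
  proof -
    have q1: "1 \<le> real_of_int q" using q0 by simp
    show ?thesis using divide_left_mono[of 1 "real_of_int q" "\<bar>real_of_int p\<bar>"] q1 by simp
  qed
  also have "\<dots> \<le> 2 ^ bl_int p" by (rule bl_int_bound)
  also have "\<dots> \<le> 2 ^ bl_rat r" unfolding bl by (intro power_increasing) auto
  finally show "\<bar>real_of_rat r\<bar> \<le> 2 ^ bl_rat r" .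
  have "real_of_int (snd (quotient_of r)) = \<bar>real_of_int q\<bar>" using q0 pq by simp
  also have "\<dots> \<le> 2 ^ bl_int q" by (rule bl_int_bound)
  also have "\<dots> \<le> 2 ^ bl_rat r" unfolding bl by (intro power_increasing) auto
  finally show "real_of_int (snd (quotient_of r)) \<le> 2 ^ bl_rat r" .
  show "bl_rat r \<ge> 1" unfolding bl using bl_int_ge1[of p] by simp
qed

lemma den_int:
  assumes "snd (quotient_of r) dvd D"
  shows "real_of_int D * real_of_rat r \<in> \<int>"
proof -
  obtain p q where pq: "quotient_of r = (p, q)" by (cases "quotient_of r") auto
  have q0: "q > 0" using quotient_of_denom_pos[OF pq] .
  have r: "r = of_int p / of_int q" using quotient_of_div[OF pq] .
  obtain t where t: "D = q * t" using assms pq by (auto elim: dvdE)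
  have "real_of_int D * real_of_rat r = real_of_int (t * p)"
    using q0 unfolding t r by (simp add: of_rat_divide field_simps)
  then show ?thesis by simp
qed

lemma bl_vec_entry: "i < dim_vec v \<Longrightarrow> bl_rat (v $ i) \<le> bl_vec v"
  unfolding bl_vec_def by (rule member_le_sum) auto

lemma bl_vec_dim: "dim_vec v \<le> bl_vec v"
proof -
  have "dim_vec v = (\<Sum>i<dim_vec v. 1)" by simp
  also have "\<dots> \<le> bl_vec v" unfolding bl_vec_def by (intro sum_mono) (use bl_rat_bounds(3) in auto)
  finally show ?thesis .
qed

lemma bl_mat_entry: "i < dim_row A \<Longrightarrow> j < dim_col A \<Longrightarrow> bl_rat (A $$ (i, j)) \<le> bl_mat A"
proof -
  assume i: "i < dim_row A" and j: "j < dim_col A"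
  have "bl_rat (A $$ (i, j)) \<le> (\<Sum>j<dim_col A. bl_rat (A $$ (i, j)))" by (rule member_le_sum) (use j in auto)
  also have "\<dots> \<le> bl_mat A" unfolding bl_mat_def by (rule member_le_sum[where f = "\<lambda>i. \<Sum>j<dim_col A. bl_rat (A $$ (i, j))"]) (use i in auto)
  finally show ?thesis .
qed

lemma bl_list_nth: "bl_list xs = (\<Sum>l<length xs. bl_vec (xs ! l))"
  unfolding bl_list_def by (simp add: sum_list_sum_nth atLeast0LessThan)

lemma bl_list_entry: "l < length xs \<Longrightarrow> bl_vec (xs ! l) \<le> bl_list xs"
  unfolding bl_list_nth by (rule member_le_sum) auto



lemma arith_bound:
  fixes P nz :: real and n M N :: nat
  assumes P2: "P \<ge> 2" and nz: "nz \<ge> 0" and nN: "n \<le> N" and nP: "real n \<le> P" and MP: "real M \<le> P^2"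
  shows "real n * ((real M * P^2 * (P^3 * (1 + nz)) + 1) * fact n * (real M * (P^2)^2 + 1) ^ n)
         \<le> P ^ (8 * N + 9) * (1 + nz)"
proof -
  have P1: "P \<ge> 1" using P2 by simp
  have P0: "P \<ge> 0" using P2 by simp
  have nz1: "1 + nz \<ge> 1" using nz by simp
  have t1: "real M * P^2 * (P^3 * (1 + nz)) + 1 \<le> P^8 * (1 + nz)"
  proof -
    have "real M * P^2 * (P^3 * (1 + nz)) \<le> P^2 * P^2 * (P^3 * (1 + nz))"
      using MP P0 nz by (intro mult_right_mono) auto
    also have "\<dots> = P^7 * (1 + nz)" by (simp add: power_add[symmetric] mult.assoc)
    finally have a: "real M * P^2 * (P^3 * (1 + nz)) \<le> P^7 * (1 + nz)" .
    have "P^7 * (1 + nz) + 1 \<le> P^7 * (1 + nz) + P^7 * (1 + nz)"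
    proof -
      have "1 \<le> P^7" using P1 by simp
      then have "1 \<le> P^7 * (1 + nz)" using nz1 by (metis mult_mono' one_le_power P1 mult_1_right zero_le_one order_trans P0 zero_le_power nz)
      then show ?thesis by linarith
    qed
    also have "\<dots> = 2 * P^7 * (1 + nz)" by simp
    also have "\<dots> \<le> P * P^7 * (1 + nz)" using P2 nz1 by (intro mult_right_mono) auto
    also have "\<dots> = P^8 * (1 + nz)" by (simp add: power_Suc[symmetric] del: power_Suc)
    finally show ?thesis using a by simp
  qed
  have t2: "fact n \<le> P ^ N"
  proof -
    have "(fact n :: real) \<le> real n ^ n" by (metis fact_le_power of_nat_fact of_nat_le_iff of_nat_power)
    also have "\<dots> \<le> P ^ n" using nP by (intro power_mono) auto
    also have "\<dots> \<le> P ^ N" using P1 nN by (intro power_increasing) auto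
    finally show ?thesis .
  qed
  have t3: "(real M * (P^2)^2 + 1) ^ n \<le> (P^7) ^ N"
  proof -
    have "real M * (P^2)^2 \<le> P^2 * (P^2)^2" using MP by (intro mult_right_mono) auto
    also have "\<dots> = P^6" by (simp add: power_add[symmetric] power_mult[symmetric])
    finally have c: "real M * (P^2)^2 \<le> P^6" .
    have "1 \<le> P^6" using P1 by (rule one_le_power)
    then have "real M * (P^2)^2 + 1 \<le> P^6 + P^6" using c by linarith
    also have "\<dots> = 2 * P^6" by simp
    also have "\<dots> \<le> P * P^6" using P2 by (intro mult_right_mono) auto
    also have "\<dots> = P^7" by (simp add: power_Suc[symmetric] del: power_Suc)
    finally have b: "real M * (P^2)^2 + 1 \<le> P^7" .
    have "(real M * (P^2)^2 + 1) ^ n \<le> (P^7) ^ n" using b by (intro power_mono) auto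
    also have "\<dots> \<le> (P^7) ^ N" using P1 nN by (intro power_increasing) auto
    finally show ?thesis .
  qed
  have "real n * ((real M * P^2 * (P^3 * (1 + nz)) + 1) * fact n * (real M * (P^2)^2 + 1) ^ n)
      \<le> P * ((P^8 * (1 + nz)) * P^N * (P^7)^N)"
    using nP t1 t2 t3 P0 nz by (intro mult_mono) auto
  also have "\<dots> = P ^ (8 * N + 9) * (1 + nz)"
  proof -
    have "P ^ (1 + 8 + N + 7 * N) = P * (P^8 * P^N * (P^7)^N)"
      unfolding power_add power_mult by (simp add: mult.assoc)
    moreover have "1 + 8 + N + 7 * N = 8 * N + 9" by simp
    ultimately have "P * (P^8 * P^N * (P^7)^N) = P ^ (8 * N + 9)" by simp
    then show ?thesis by (simp add: mult.assoc mult.commute mult.left_commute)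
  qed
  finally show ?thesis .
qed



lemma mat_vec_index:
  assumes A: "A \<in> carrier_mat m n" and x: "x \<in> carrier_vec n" and i: "i < m"
  shows "(map_mat real_of_rat A *\<^sub>v x) $ i = (\<Sum>j<n. real_of_rat (A $$ (i, j)) * x $ j)"
  using A x i unfolding mult_mat_vec_def scalar_prod_def
  by (auto simp: lessThan_atLeast0 intro!: sum.cong)

lemma polyhedron_iff:
  assumes A: "A \<in> carrier_mat m n" and b: "b \<in> carrier_vec m"
  shows "x \<in> polyhedron n A b \<longleftrightarrow> x \<in> carrier_vec n \<and>
     (\<forall>i<m. (\<Sum>j<n. real_of_rat (A $$ (i, j)) * x $ j) \<le> real_of_rat (b $ i))"
proof
  assume "x \<in> polyhedron n A b"
  then have x: "x \<in> carrier_vec n" and le: "map_mat of_rat A *\<^sub>v x \<le> map_vec of_rat b"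
    unfolding polyhedron_def by auto
  show "x \<in> carrier_vec n \<and> (\<forall>i<m. (\<Sum>j<n. real_of_rat (A $$ (i, j)) * x $ j) \<le> real_of_rat (b $ i))"
  proof (intro conjI allI impI x)
    fix i assume i: "i < m"
    have "(map_mat of_rat A *\<^sub>v x) $ i \<le> map_vec of_rat b $ i"
      using le i b unfolding less_eq_vec_def by auto
    then show "(\<Sum>j<n. real_of_rat (A $$ (i, j)) * x $ j) \<le> real_of_rat (b $ i)"
      using mat_vec_index[OF A x i] i b by simp
  qed
next
  assume H: "x \<in> carrier_vec n \<and> (\<forall>i<m. (\<Sum>j<n. real_of_rat (A $$ (i, j)) * x $ j) \<le> real_of_rat (b $ i))"
  then have x: "x \<in> carrier_vec n" by simp
  have "map_mat of_rat A *\<^sub>v x \<le> map_vec of_rat b"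
    unfolding less_eq_vec_def
  proof (intro conjI allI impI)
    show "dim_vec (map_mat real_of_rat A *\<^sub>v x) = dim_vec (map_vec real_of_rat b)" using A b by simp
    fix i assume "i < dim_vec (map_vec real_of_rat b)"
    then have i: "i < m" using b by simp
    show "(map_mat real_of_rat A *\<^sub>v x) $ i \<le> map_vec real_of_rat b $ i"
      using mat_vec_index[OF A x i] H i b by simp
  qed
  then show "x \<in> polyhedron n A b" unfolding polyhedron_def using x by simp
qed

lemma den_prod:
  fixes f :: "nat \<Rightarrow> nat \<Rightarrow> rat"
  shows "real_of_int (\<Prod>i<p. \<Prod>j<q. snd (quotient_of (f i j))) \<le> 2 ^ (\<Sum>i<p. \<Sum>j<q. bl_rat (f i j))"
    and "(\<Prod>i<p. \<Prod>j<q. snd (quotient_of (f i j))) > 0"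
    and "i < p \<Longrightarrow> j < q \<Longrightarrow> snd (quotient_of (f i j)) dvd (\<Prod>i<p. \<Prod>j<q. snd (quotient_of (f i j)))"
proof -
  have "real_of_int (\<Prod>i<p. \<Prod>j<q. snd (quotient_of (f i j))) = (\<Prod>i<p. \<Prod>j<q. real_of_int (snd (quotient_of (f i j))))"
    by simp
  also have "\<dots> \<le> (\<Prod>i<p. \<Prod>j<q. (2::real) ^ bl_rat (f i j))"
  proof (rule prod_mono, rule conjI)
    have hlp: "0 \<le> real_of_int (snd (quotient_of r)) \<and> real_of_int (snd (quotient_of r)) \<le> 2 ^ bl_rat r" for r
      using bl_rat_bounds(2)[of r] quotient_of_denom_pos'[of r] by linarith
    fix i
    show "0 \<le> (\<Prod>j<q. real_of_int (snd (quotient_of (f i j))))"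
      by (rule prod_nonneg) (use hlp in blast)
    show "(\<Prod>j<q. real_of_int (snd (quotient_of (f i j)))) \<le> (\<Prod>j<q. (2::real) ^ bl_rat (f i j))"
      by (rule prod_mono) (use hlp in blast)
  qed
  also have "\<dots> = 2 ^ (\<Sum>i<p. \<Sum>j<q. bl_rat (f i j))" by (simp add: power_sum)
  finally show "real_of_int (\<Prod>i<p. \<Prod>j<q. snd (quotient_of (f i j))) \<le> 2 ^ (\<Sum>i<p. \<Sum>j<q. bl_rat (f i j))" .
  show "(\<Prod>i<p. \<Prod>j<q. snd (quotient_of (f i j))) > 0"
    by (intro prod_pos) (auto intro: quotient_of_denom_pos')
  assume i: "i < p" and j: "j < q"
  have "snd (quotient_of (f i j)) dvd (\<Prod>j<q. snd (quotient_of (f i j)))" using j by auto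
  also have "\<dots> dvd (\<Prod>i<p. \<Prod>j<q. snd (quotient_of (f i j)))"
    using i by (intro dvd_prodI[where f = "\<lambda>i. \<Prod>j<q. snd (quotient_of (f i j))"]) auto
  finally show "snd (quotient_of (f i j)) dvd (\<Prod>i<p. \<Prod>j<q. snd (quotient_of (f i j)))" .
qed

lemma abs_sum_bound:
  fixes u w :: "nat \<Rightarrow> real"
  assumes "\<forall>j<n. \<bar>u j\<bar> \<le> U" "\<forall>j<n. \<bar>w j\<bar> \<le> W" "U \<ge> 0"
  shows "\<bar>\<Sum>j<n. u j * w j\<bar> \<le> real n * (U * W)"
proof -
  have "\<bar>\<Sum>j<n. u j * w j\<bar> \<le> (\<Sum>j<n. \<bar>u j * w j\<bar>)" by (rule sum_abs)
  also have "\<dots> \<le> (\<Sum>j<n. U * W)"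
  proof (rule sum_mono)
    fix j assume "j \<in> {..<n}"
    then have "\<bar>u j\<bar> \<le> U" "\<bar>w j\<bar> \<le> W" using assms by auto
    then show "\<bar>u j * w j\<bar> \<le> U * W" unfolding abs_mult using assms(3) by (intro mult_mono) auto
  qed
  also have "\<dots> = real n * (U * W)" by simp
  finally show ?thesis .
qed



lemma main_bound:
  assumes A: "A \<in> carrier_mat m n" and b: "b \<in> carrier_vec m"
    and dims: "\<forall>v \<in> set xs. v \<in> carrier_vec n"
    and orth: "\<forall>i < length xs. \<forall>j < length xs. i \<noteq> j \<longrightarrow> xs ! i \<bullet> xs ! j = 0"
    and xsP: "xstar \<in> polyhedron n A b" and n1: "n \<ge> 1"
  shows "\<exists>x' \<in> polyhedron n A b.
         orth_proj n (lin_span n xs) x' = orth_proj n (lin_span n xs) xstar \<and>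
         vnorm x' \<le> ((2::real) ^ (enc_poly n A b + bl_list xs)) ^ (8 * (enc_poly n A b + bl_list xs) + 9)
                     * (1 + vnorm (orth_proj n (lin_span n xs) xstar))"
proof -
  define k where "k = length xs"
  define z where "z = orth_proj n (lin_span n xs) xstar"
  define nz where "nz = vnorm z"
  have xsc: "xstar \<in> carrier_vec n" and xsle: "\<forall>i<m. (\<Sum>j<n. real_of_rat (A $$ (i, j)) * xstar $ j) \<le> real_of_rat (b $ i)"
    using xsP polyhedron_iff[OF A b] by auto
  have zc: "z \<in> carrier_vec n" and zperp: "\<forall>l<k. (\<Sum>j<n. xstar $ j * xf xs l j) = (\<Sum>j<n. z $ j * xf xs l j)"
    using proj_facts[OF dims orth xsc] unfolding z_def k_def by auto
  have nz0: "nz \<ge> 0"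
  proof -
    have "z \<bullet> z = (\<Sum>j<n. z $ j * z $ j)" using zc by (simp add: dot_lessThan)
    also have "\<dots> \<ge> 0" by (intro sum_nonneg) auto
    finally show ?thesis unfolding nz_def vnorm_def by simp
  qed
  have zj: "\<bar>z $ j\<bar> \<le> nz" if j: "j < n" for j
  proof -
    have "z $ j * z $ j \<le> (\<Sum>i<n. z $ i * z $ i)"
      using j by (intro member_le_sum) auto
    also have "\<dots> = z \<bullet> z" using zc by (simp add: dot_lessThan)
    finally have "(z $ j)^2 \<le> z \<bullet> z" by (simp add: power2_eq_square)
    then have "sqrt ((z $ j)^2) \<le> sqrt (z \<bullet> z)" by (rule real_sqrt_le_mono)
    then show ?thesis unfolding nz_def vnorm_def by simp
  qed
  define E where "E = enc_poly n A b"
  define B where "B = bl_list xs"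
  define N where "N = E + B"
  define P where "P = (2::real) ^ N"
  have dimA: "dim_row A = m" "dim_col A = n" using A by auto
  have dimb: "dim_vec b = m" using b by auto
  have dimx: "dim_vec (xs ! l) = n" if "l < k" for l using dims that unfolding k_def by auto
  have nE: "n \<le> E" unfolding E_def enc_poly_def by simp
  have blA: "bl_mat A \<le> E" and blb: "bl_vec b \<le> E" unfolding E_def enc_poly_def by auto
  have mE: "m \<le> E" using bl_vec_dim[of b] dimb blb by simp
  have kB: "k \<le> B"
  proof -
    have "k = (\<Sum>l<k. 1)" by simp
    also have "\<dots> \<le> (\<Sum>l<k. bl_vec (xs ! l))"
      using bl_vec_dim dimx n1 by (intro sum_mono) (metis lessThan_iff order_trans)
    also have "\<dots> = B" unfolding B_def bl_list_nth k_def ..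
    finally show ?thesis .
  qed
  have N1: "N \<ge> 1" using nE n1 unfolding N_def by simp
  have P2: "P \<ge> 2"
  proof -
    have "(2::real) ^ 1 \<le> 2 ^ N" using N1 by (intro power_increasing) auto
    then show ?thesis unfolding P_def by simp
  qed
  have P1: "P \<ge> 1" and P0: "P \<ge> 0" using P2 by auto
  have NP: "real N \<le> P"
  proof -
    have "N < 2 ^ N" by (rule less_exp)
    then have "real N < real (2 ^ N)" by (simp only: of_nat_less_iff)
    then show ?thesis unfolding P_def by simp
  qed
  have nP: "real n \<le> P" using NP nE unfolding N_def by simp
  have powN: "(2::real) ^ t \<le> P" if "t \<le> N" for t unfolding P_def using that by (intro power_increasing) auto
  have Ab: "\<bar>real_of_rat (A $$ (i, j))\<bar> \<le> P" if "i < m" "j < n" for i j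
  proof -
    have "\<bar>real_of_rat (A $$ (i, j))\<bar> \<le> 2 ^ bl_rat (A $$ (i, j))" by (rule bl_rat_bounds(1))
    also have "\<dots> \<le> P" using bl_mat_entry[of i A j] that dimA blA by (intro powN) (simp add: N_def)
    finally show ?thesis .
  qed
  have bb: "\<bar>real_of_rat (b $ i)\<bar> \<le> P" if "i < m" for i
  proof -
    have "\<bar>real_of_rat (b $ i)\<bar> \<le> 2 ^ bl_rat (b $ i)" by (rule bl_rat_bounds(1))
    also have "\<dots> \<le> P" using bl_vec_entry[of i b] that dimb blb by (intro powN) (simp add: N_def)
    finally show ?thesis .
  qed
  have Xb: "\<bar>xf xs l j\<bar> \<le> P" if "l < k" "j < n" for l j
  proof -
    have "\<bar>xf xs l j\<bar> \<le> 2 ^ bl_rat (xs ! l $ j)" unfolding xf_def by (rule bl_rat_bounds(1))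
    also have "\<dots> \<le> P"
    proof (rule powN)
      have "bl_rat (xs ! l $ j) \<le> bl_vec (xs ! l)" using bl_vec_entry[of j "xs ! l"] dimx that by simp
      also have "\<dots> \<le> B" unfolding B_def using bl_list_entry that k_def by simp
      finally show "bl_rat (xs ! l $ j) \<le> N" unfolding N_def by simp
    qed
    finally show ?thesis .
  qed
  define DA where "DA = (\<Prod>i<m. \<Prod>j<n. snd (quotient_of ((\<lambda>i j. A $$ (i, j)) i j)))"
  define DX where "DX = (\<Prod>l<k. \<Prod>j<n. snd (quotient_of ((\<lambda>l j. xs ! l $ j) l j)))"
  define Di where "Di = DA * DX"
  define D where "D = real_of_int Di"
  have DA0: "DA > 0" and DX0: "DX > 0" unfolding DA_def DX_def by (rule den_prod(2))+
  have D0: "D > 0" unfolding D_def Di_def using DA0 DX0 by simp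
  have DAb: "real_of_int DA \<le> 2 ^ bl_mat A"
    using den_prod(1)[where f = "\<lambda>i j. A $$ (i, j)" and p = m and q = n] unfolding DA_def bl_mat_def dimA by simp
  have DXb: "real_of_int DX \<le> 2 ^ B"
  proof -
    have "(\<Sum>l<k. \<Sum>j<n. bl_rat (xs ! l $ j)) = B"
      unfolding B_def bl_list_nth k_def[symmetric] bl_vec_def using dimx by (intro sum.cong refl) auto
    then show ?thesis using den_prod(1)[where f = "\<lambda>l j. xs ! l $ j" and p = k and q = n] unfolding DX_def by simp
  qed
  have DP: "D \<le> P"
  proof -
    have "D = real_of_int DA * real_of_int DX" unfolding D_def Di_def by simp
    also have "\<dots> \<le> 2 ^ bl_mat A * 2 ^ B" using DAb DXb DX0 by (intro mult_mono) auto
    also have "\<dots> = 2 ^ (bl_mat A + B)" by (simp add: power_add)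
    also have "\<dots> \<le> P" using blA by (intro powN) (simp add: N_def)
    finally show ?thesis .
  qed
  have Aint: "D * real_of_rat (A $$ (i, j)) \<in> \<int>" if "i < m" "j < n" for i j
  proof -
    have "snd (quotient_of (A $$ (i, j))) dvd DA" unfolding DA_def using den_prod(3)[OF that, of "\<lambda>i j. A $$ (i, j)"] by simp
    then have "snd (quotient_of (A $$ (i, j))) dvd Di" unfolding Di_def by simp
    then show ?thesis unfolding D_def by (rule den_int)
  qed
  have Xint: "D * xf xs l j \<in> \<int>" if "l < k" "j < n" for l j
  proof -
    have "snd (quotient_of (xs ! l $ j)) dvd DX" unfolding DX_def using den_prod(3)[OF that, of "\<lambda>l j. xs ! l $ j"] by simp
    then have "snd (quotient_of (xs ! l $ j)) dvd Di" unfolding Di_def by simp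
    then show ?thesis unfolding D_def xf_def by (rule den_int)
  qed
  define dx where "dx = (\<lambda>l. \<Sum>j<n. xstar $ j * xf xs l j)"
  have dxb: "\<bar>dx l\<bar> \<le> P * P * nz" if l: "l < k" for l
  proof -
    have "dx l = (\<Sum>j<n. z $ j * xf xs l j)" unfolding dx_def using zperp l by simp
    also have "\<bar>\<dots>\<bar> \<le> real n * (nz * P)" using zj Xb[OF l] nz0 by (intro abs_sum_bound) auto
    also have "\<dots> \<le> P * (nz * P)" using nP nz0 P0 by (intro mult_right_mono) auto
    finally show ?thesis by (simp add: mult.commute mult.left_commute)
  qed
  define M where "M = m + 2 * k"
  define a where "a = (\<lambda>i j. if i < m then D * real_of_rat (A $$ (i, j))
       else if i < m + k then D * xf xs (i - m) j else - (D * xf xs (i - m - k) j))"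
  define be where "be = (\<lambda>i. if i < m then D * real_of_rat (b $ i)
       else if i < m + k then D * dx (i - m) else - (D * dx (i - m - k)))"
  have lhs1: "lhs a n y i = D * (\<Sum>j<n. real_of_rat (A $$ (i, j)) * y j)" if "i < m" for i y
    unfolding lhs_def a_def using that by (simp add: sum_distrib_left mult.assoc)
  have lhs2: "lhs a n y (m + l) = D * (\<Sum>j<n. y j * xf xs l j)" if "l < k" for l y
    unfolding lhs_def a_def using that by (simp add: sum_distrib_left mult.assoc mult.commute mult.left_commute)
  have lhs3: "lhs a n y (m + k + l) = - (D * (\<Sum>j<n. y j * xf xs l j))" if "l < k" for l y
    unfolding lhs_def a_def using that by (simp add: sum_distrib_left sum_negf mult.assoc mult.commute mult.left_commute)
  have rowcases: "i < m \<or> (\<exists>l<k. i = m + l) \<or> (\<exists>l<k. i = m + k + l)" if "i < M" for i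
  proof -
    consider "i < m" | "m \<le> i \<and> i < m + k" | "m + k \<le> i" by linarith
    then show ?thesis
    proof cases
      case 2 then show ?thesis by (intro disjI2 disjI1 exI[of _ "i - m"]) auto
    next
      case 3 then show ?thesis using that unfolding M_def by (intro disjI2 exI[of _ "i - m - k"]) auto
    qed simp
  qed
  have be1: "be i = D * real_of_rat (b $ i)" if "i < m" for i unfolding be_def using that by simp
  have be2: "be (m + l) = D * dx l" if "l < k" for l unfolding be_def using that by simp
  have be3: "be (m + k + l) = - (D * dx l)" if "l < k" for l unfolding be_def using that by simp
  have ints: "\<forall>i<M. \<forall>j<n. a i j \<in> \<int>"
  proof (intro allI impI)
    fix i j assume i: "i < M" and j: "j < n"
    consider "i < m" | l where "l < k" "i = m + l" | l where "l < k" "i = m + k + l" using rowcases[OF i] by blast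
    then show "a i j \<in> \<int>"
    proof cases
      case 1 then show ?thesis unfolding a_def using Aint j by simp
    next
      case (2 l) then show ?thesis unfolding a_def using Xint j by simp
    next
      case (3 l) then show ?thesis unfolding a_def using Xint j by (simp add: Ints_minus)
    qed
  qed
  define H where "H = P^2"
  define R where "R = P^3 * (1 + nz)"
  have Hb: "\<forall>i<M. \<forall>j<n. \<bar>a i j\<bar> \<le> H"
  proof (intro allI impI)
    fix i j assume i: "i < M" and j: "j < n"
    have aux: "\<bar>D * t\<bar> \<le> H" if "\<bar>t\<bar> \<le> P" for t
    proof -
      have "\<bar>D * t\<bar> = D * \<bar>t\<bar>" using D0 by (simp add: abs_mult)
      also have "\<dots> \<le> P * P" using DP that D0 by (intro mult_mono) auto
      finally show ?thesis unfolding H_def by (simp add: power2_eq_square)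
    qed
    consider "i < m" | l where "l < k" "i = m + l" | l where "l < k" "i = m + k + l" using rowcases[OF i] by blast
    then show "\<bar>a i j\<bar> \<le> H"
    proof cases
      case 1 then show ?thesis unfolding a_def using aux Ab j by simp
    next
      case (2 l) then show ?thesis unfolding a_def using aux Xb j by simp
    next
      case (3 l) then show ?thesis unfolding a_def using aux Xb j by simp
    qed
  qed
  have H0: "H \<ge> 0" unfolding H_def by simp
  have R0: "R \<ge> 0" unfolding R_def using P0 nz0 by simp
  have Rb: "\<forall>i<M. \<bar>be i\<bar> \<le> R"
  proof (intro allI impI)
    fix i assume i: "i < M"
    have P3: "P * P \<le> P^3" using P1 by (simp add: power3_eq_cube)
    have aux: "\<bar>D * t\<bar> \<le> R" if "\<bar>t\<bar> \<le> P * P * (1 + nz)" for t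
    proof -
      have "\<bar>D * t\<bar> = D * \<bar>t\<bar>" using D0 by (simp add: abs_mult)
      also have "\<dots> \<le> P * (P * P * (1 + nz))" using DP that D0 by (intro mult_mono) auto
      also have "\<dots> = P^3 * (1 + nz)" by (simp add: power3_eq_cube)
      finally show ?thesis unfolding R_def .
    qed
    have bb': "\<bar>real_of_rat (b $ i)\<bar> \<le> P * P * (1 + nz)" if "i < m"
    proof -
      have "P \<le> P * P" using P1 by (simp add: mult_le_cancel_left1)
      also have "\<dots> \<le> P * P * (1 + nz)" using P0 nz0 by (simp add: mult_le_cancel_left1)
      finally show ?thesis using bb[OF that] by linarith
    qed
    have dxb': "\<bar>dx l\<bar> \<le> P * P * (1 + nz)" if "l < k" for l
    proof -
      have "P * P * nz \<le> P * P * (1 + nz)" using P0 by (intro mult_left_mono) auto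
      then show ?thesis using dxb[OF that] by linarith
    qed
    consider "i < m" | l where "l < k" "i = m + l" | l where "l < k" "i = m + k + l" using rowcases[OF i] by blast
    then show "\<bar>be i\<bar> \<le> R"
    proof cases
      case 1 then show ?thesis using be1 aux bb' by simp
    next
      case (2 l) then show ?thesis using be2 aux dxb' by simp
    next
      case (3 l) then show ?thesis using be3 aux dxb' by simp
    qed
  qed
  have feas0: "\<forall>i<M. lhs a n (\<lambda>j. xstar $ j) i \<le> be i"
  proof (intro allI impI)
    fix i assume i: "i < M"
    consider "i < m" | l where "l < k" "i = m + l" | l where "l < k" "i = m + k + l" using rowcases[OF i] by blast
    then show "lhs a n (\<lambda>j. xstar $ j) i \<le> be i"
    proof cases
      case 1 then show ?thesis using lhs1 be1 xsle D0 by simp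
    next
      case (2 l) then show ?thesis using lhs2 be2 unfolding dx_def by simp
    next
      case (3 l) then show ?thesis using lhs3 be3 unfolding dx_def by simp
    qed
  qed
  obtain x where feas: "\<forall>i<M. lhs a n x i \<le> be i"
    and xb: "\<forall>j<n. \<bar>x j\<bar> \<le> (real M * H * R + 1) * fact n * (real M * H^2 + 1) ^ n"
    using core_bound[OF ints Hb H0 Rb R0 feas0] by blast
  define x' where "x' = vec n x"
  have x'c: "x' \<in> carrier_vec n" unfolding x'_def by simp
  have x'P: "x' \<in> polyhedron n A b"
    unfolding polyhedron_iff[OF A b]
  proof (intro conjI allI impI x'c)
    fix i assume i: "i < m"
    have "lhs a n x i \<le> be i" using feas i unfolding M_def by simp
    then have "D * (\<Sum>j<n. real_of_rat (A $$ (i, j)) * x j) \<le> D * real_of_rat (b $ i)"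
      using lhs1[OF i] be1[OF i] by simp
    then have "(\<Sum>j<n. real_of_rat (A $$ (i, j)) * x j) \<le> real_of_rat (b $ i)" using D0 by simp
    moreover have "(\<Sum>j<n. real_of_rat (A $$ (i, j)) * x' $ j) = (\<Sum>j<n. real_of_rat (A $$ (i, j)) * x j)"
      unfolding x'_def by (intro sum.cong refl) simp
    ultimately show "(\<Sum>j<n. real_of_rat (A $$ (i, j)) * x' $ j) \<le> real_of_rat (b $ i)" by simp
  qed
  have eqc: "(\<Sum>j<n. x' $ j * xf xs l j) = (\<Sum>j<n. xstar $ j * xf xs l j)" if l: "l < k" for l
  proof -
    have "lhs a n x (m + l) \<le> be (m + l)" using feas l unfolding M_def by simp
    then have u: "D * (\<Sum>j<n. x j * xf xs l j) \<le> D * dx l" using lhs2[OF l] be2[OF l] by simp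
    have "lhs a n x (m + k + l) \<le> be (m + k + l)" using feas l unfolding M_def by simp
    then have v: "- (D * (\<Sum>j<n. x j * xf xs l j)) \<le> - (D * dx l)" using lhs3[OF l] be3[OF l] by simp
    from u v have "D * (\<Sum>j<n. x j * xf xs l j) = D * dx l" by linarith
    then have "(\<Sum>j<n. x j * xf xs l j) = dx l" using D0 by simp
    moreover have "(\<Sum>j<n. x' $ j * xf xs l j) = (\<Sum>j<n. x j * xf xs l j)"
      unfolding x'_def by (intro sum.cong refl) simp
    ultimately show ?thesis unfolding dx_def by simp
  qed
  have projeq: "orth_proj n (lin_span n xs) x' = orth_proj n (lin_span n xs) xstar"
    by (rule proj_eq[OF x'c xsc]) (use eqc in \<open>simp add: k_def\<close>)
  define Cb where "Cb = (real M * H * R + 1) * fact n * (real M * H^2 + 1) ^ n"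
  have Cb0: "Cb \<ge> 0" unfolding Cb_def using H0 R0 by simp
  have MP: "real M \<le> P^2"
  proof -
    have "real M \<le> 2 * real N" unfolding M_def N_def using mE kB by simp
    also have "\<dots> \<le> 2 * P" using NP by simp
    also have "\<dots> \<le> P * P" using P2 P0 by (intro mult_right_mono) auto
    finally show ?thesis by (simp add: power2_eq_square)
  qed
  have nN: "n \<le> N" using nE unfolding N_def by simp
  have "vnorm x' \<le> real n * Cb"
  proof -
    have "x' \<bullet> x' = (\<Sum>j<n. x j * x j)" using x'c unfolding x'_def by (simp add: dot_lessThan)
    also have "\<dots> \<le> (\<Sum>j<n. Cb * Cb)"
    proof (rule sum_mono)
      fix j assume "j \<in> {..<n}"
      then have "\<bar>x j\<bar> \<le> Cb" using xb unfolding Cb_def by simp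
      then have "\<bar>x j\<bar> * \<bar>x j\<bar> \<le> Cb * Cb" by (intro mult_mono) auto
      then show "x j * x j \<le> Cb * Cb" by (simp add: abs_mult[symmetric])
    qed
    also have "\<dots> = real n * (Cb * Cb)" by simp
    also have "\<dots> \<le> real n * real n * (Cb * Cb)" using n1 by (intro mult_right_mono) auto
    also have "\<dots> = (real n * Cb)^2" by (simp add: power2_eq_square)
    finally have "sqrt (x' \<bullet> x') \<le> sqrt ((real n * Cb)^2)" by (rule real_sqrt_le_mono)
    then show ?thesis unfolding vnorm_def using Cb0 by simp
  qed
  also have "\<dots> \<le> P ^ (8 * N + 9) * (1 + nz)"
    unfolding Cb_def H_def R_def using arith_bound[OF P2 nz0 nN nP MP] by simp
  finally show ?thesis using x'P projeq unfolding P_def N_def E_def B_def nz_def z_def by blast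
qed



lemma poly2_c1: "poly2 (\<lambda>(i::nat) (j::nat). if j = 1 then (1::real) else 0) 1 s t = t + s * t"
  unfolding poly2_def by (simp add: numeral_eq_Suc atMost_Suc)

lemma poly2_c2:
  assumes "x \<ge> 0" "y \<ge> 0"
  shows "(x + y) * (8 * (x + y) + 9) \<le> poly2 (\<lambda>(i::nat) (j::nat). (40::real)) 2 x y"
proof -
  have e: "poly2 (\<lambda>(i::nat) (j::nat). (40::real)) 2 x y =
     40 * (1 + y + y^2 + x + x * y + x * y^2 + x^2 + x^2 * y + x^2 * y^2)"
    unfolding poly2_def by (simp add: numeral_eq_Suc atMost_Suc algebra_simps)
  have "0 \<le> x * (y * y)" "0 \<le> x * (x * y)" "0 \<le> x * (x * (y * y))" "0 \<le> x * y" "0 \<le> x * x" "0 \<le> y * y" using assms by auto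
  then show ?thesis unfolding e using assms by (simp add: algebra_simps power2_eq_square)
qed

theorem lemma5p3:
  shows "\<exists>(c1 :: nat \<Rightarrow> nat \<Rightarrow> real) d1 (c2 :: nat \<Rightarrow> nat \<Rightarrow> real) d2.
    \<forall>(n :: nat) (m :: nat) (A :: rat mat) (b :: rat vec) (xs :: rat vec list) (xstar :: real vec).
      A \<in> carrier_mat m n \<longrightarrow> b \<in> carrier_vec m \<longrightarrow>
      polyhedron n A b \<noteq> {} \<longrightarrow>
      (\<forall>v \<in> set xs. v \<in> carrier_vec n) \<longrightarrow>
      (\<forall>i < length xs. \<forall>j < length xs. i \<noteq> j \<longrightarrow> xs ! i \<bullet> xs ! j = 0) \<longrightarrow>
      xstar \<in> polyhedron n A b \<longrightarrow>
      (\<exists>x' \<in> polyhedron n A b.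
         orth_proj n (lin_span n xs) x' = orth_proj n (lin_span n xs) xstar \<and>
         vnorm x' \<le> poly2 c1 d1 (vnorm (orth_proj n (lin_span n xs) xstar))
                      (2 powr poly2 c2 d2 (real (enc_poly n A b)) (real (bl_list xs))))"
proof (intro exI allI impI)
  fix n m :: nat and A :: "rat mat" and b :: "rat vec" and xs :: "rat vec list" and xstar :: "real vec"
  assume A: "A \<in> carrier_mat m n" and b: "b \<in> carrier_vec m" and ne: "polyhedron n A b \<noteq> {}"
    and dims: "\<forall>v \<in> set xs. v \<in> carrier_vec n"
    and orth: "\<forall>i < length xs. \<forall>j < length xs. i \<noteq> j \<longrightarrow> xs ! i \<bullet> xs ! j = 0"
    and xsP: "xstar \<in> polyhedron n A b"
  define nz where "nz = vnorm (orth_proj n (lin_span n xs) xstar)"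
  define T where "T = 2 powr poly2 (\<lambda>(i::nat) (j::nat). (40::real)) 2 (real (enc_poly n A b)) (real (bl_list xs))"
  have T0: "T > 0" unfolding T_def by simp
  have nz0: "nz \<ge> 0"
  proof -
    have "orth_proj n (lin_span n xs) xstar \<in> carrier_vec n"
      using proj_facts[OF dims orth] xsP unfolding polyhedron_def by auto
    then have "orth_proj n (lin_span n xs) xstar \<bullet> orth_proj n (lin_span n xs) xstar \<ge> 0"
      by (simp add: dot_lessThan sum_nonneg)
    then show ?thesis unfolding nz_def vnorm_def by simp
  qed
  have rhs: "poly2 (\<lambda>(i::nat) (j::nat). if j = 1 then (1::real) else 0) 1 nz T = T * (1 + nz)"
    unfolding poly2_c1 by (simp add: algebra_simps)
  have key: "\<exists>x' \<in> polyhedron n A b.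
         orth_proj n (lin_span n xs) x' = orth_proj n (lin_span n xs) xstar \<and> vnorm x' \<le> T * (1 + nz)"
  proof (cases "n = 0")
    case True
    have "xstar \<in> carrier_vec 0" using xsP True unfolding polyhedron_def by auto
    then have "vnorm xstar = 0" unfolding vnorm_def scalar_prod_def by simp
    moreover have "T * (1 + nz) \<ge> 0" using T0 nz0 by simp
    ultimately show ?thesis using xsP by auto
  next
    case False
    then have n1: "n \<ge> 1" by simp
    define N where "N = enc_poly n A b + bl_list xs"
    obtain x' where x'P: "x' \<in> polyhedron n A b"
      and pe: "orth_proj n (lin_span n xs) x' = orth_proj n (lin_span n xs) xstar"
      and vb: "vnorm x' \<le> ((2::real) ^ N) ^ (8 * N + 9) * (1 + nz)"
      using main_bound[OF A b dims orth xsP n1] unfolding N_def nz_def by blast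
    have "((2::real) ^ N) ^ (8 * N + 9) = 2 powr (real (N * (8 * N + 9)))"
      unfolding power_mult[symmetric] by (rule powr_realpow[symmetric]) simp
    also have "\<dots> \<le> T"
    proof -
      have "real (N * (8 * N + 9)) = (real (enc_poly n A b) + real (bl_list xs)) * (8 * (real (enc_poly n A b) + real (bl_list xs)) + 9)"
        unfolding N_def by simp
      also have "\<dots> \<le> poly2 (\<lambda>(i::nat) (j::nat). (40::real)) 2 (real (enc_poly n A b)) (real (bl_list xs))"
        by (rule poly2_c2) auto
      finally show ?thesis unfolding T_def by (intro powr_mono) auto
    qed
    finally have "((2::real) ^ N) ^ (8 * N + 9) * (1 + nz) \<le> T * (1 + nz)"
      using nz0 by (intro mult_right_mono) auto
    then show ?thesis using x'P pe vb by auto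
  qed
  have "poly2 (\<lambda>(i::nat) (j::nat). if j = 1 then (1::real) else 0) 1 (vnorm (orth_proj n (lin_span n xs) xstar))
      (2 powr poly2 (\<lambda>(i::nat) (j::nat). (40::real)) 2 (real (enc_poly n A b)) (real (bl_list xs))) = T * (1 + nz)"
    using rhs unfolding nz_def T_def .
  then show "\<exists>x' \<in> polyhedron n A b.
         orth_proj n (lin_span n xs) x' = orth_proj n (lin_span n xs) xstar \<and>
         vnorm x' \<le> poly2 (\<lambda>(i::nat) (j::nat). if j = 1 then (1::real) else 0) 1 (vnorm (orth_proj n (lin_span n xs) xstar))
                      (2 powr poly2 (\<lambda>(i::nat) (j::nat). (40::real)) 2 (real (enc_poly n A b)) (real (bl_list xs)))"
    using key by simp
qed


end
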